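(* Let $k$ be a positive integer and let $D$ be a digraph of order $n$ with no isolated vertex and maximum out-degree $\Delta^+$. Then $\gamma_{trk}(D)\ge\left\lceil\frac{kn+1}{\Delta^++k}\right\rceil$, and this bound is sharp.
   Context: All digraphs are finite, with no loops or multiple arcs (pairs of opposite arcs are allowed). $N^-(v)$ denotes the set of in-neighbors of $v$. A vertex is isolated if it has no in-neighbor and no out-neighbor. For a positive integer $k$, a $k$-rainbow dominating function ($k$RDF) on $D$ is a function $f:V(D)\to\mathcal P(\{1,\dots,k\})$ such that every $v$ with $f(v)=\emptyset$ satisfies $\bigcup_{u\in N^-(v)}f(u)=\{1,\dots,k\}$; its weight is $\omega(f)=\sum_v|f(v)|$. If $D$ has no isolated vertex, a total $k$RDF (T$k$RDF) is a $k$RDF $f$ such that the subdigraph induced by $\{v:f(v)\ne\emptyset\}$ has no isolated vertex; $\gamma_{trk}(D)$ is the minimum weight of a T$k$RDF. *)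

theory Defs
  imports Complex_Main
begin

text \<open>A digraph: finite vertex set V, arc set A \<subseteq> V \<times> V, no loops
  (pairs of opposite arcs allowed; multiple arcs impossible as A is a set).\<close>
definition digraph :: "'a set \<Rightarrow> ('a \<times> 'a) set \<Rightarrow> bool" where
  "digraph V A \<longleftrightarrow> finite V \<and> A \<subseteq> V \<times> V \<and> (\<forall>v. (v, v) \<notin> A)"

definition in_nbrs :: "('a \<times> 'a) set \<Rightarrow> 'a \<Rightarrow> 'a set" where
  "in_nbrs A v = {u. (u, v) \<in> A}"

definition out_degree :: "('a \<times> 'a) set \<Rightarrow> 'a \<Rightarrow> nat" where
  "out_degree A v = card {w. (v, w) \<in> A}"

definition max_out_degree :: "'a set \<Rightarrow> ('a \<times> 'a) set \<Rightarrow> nat" where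
  "max_out_degree V A = Max (out_degree A ` V)"

definition isolated_in :: "'a set \<Rightarrow> ('a \<times> 'a) set \<Rightarrow> 'a \<Rightarrow> bool" where
  "isolated_in S A v \<longleftrightarrow> (\<forall>u\<in>S. (u, v) \<notin> A \<and> (v, u) \<notin> A)"

definition no_isolated :: "'a set \<Rightarrow> ('a \<times> 'a) set \<Rightarrow> bool" where
  "no_isolated V A \<longleftrightarrow> (\<forall>v\<in>V. \<not> isolated_in V A v)"

definition kRDF :: "nat \<Rightarrow> 'a set \<Rightarrow> ('a \<times> 'a) set \<Rightarrow> ('a \<Rightarrow> nat set) \<Rightarrow> bool" where
  "kRDF k V A f \<longleftrightarrow>
     (\<forall>v\<in>V. f v \<subseteq> {1..k}) \<and> (\<forall>v. v \<notin> V \<longrightarrow> f v = {}) \<and>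
     (\<forall>v\<in>V. f v = {} \<longrightarrow> (\<Union>u\<in>in_nbrs A v. f u) = {1..k})"

definition weight :: "'a set \<Rightarrow> ('a \<Rightarrow> nat set) \<Rightarrow> nat" where
  "weight V f = (\<Sum>v\<in>V. card (f v))"

definition TkRDF :: "nat \<Rightarrow> 'a set \<Rightarrow> ('a \<times> 'a) set \<Rightarrow> ('a \<Rightarrow> nat set) \<Rightarrow> bool" where
  "TkRDF k V A f \<longleftrightarrow> kRDF k V A f \<and>
     no_isolated {v\<in>V. f v \<noteq> {}} A"

definition gamma_trk :: "nat \<Rightarrow> 'a set \<Rightarrow> ('a \<times> 'a) set \<Rightarrow> nat" where
  "gamma_trk k V A = Min {weight V f | f. TkRDF k V A f}"

end

theory Submission
  imports Defs
begin

lemma lower_weight: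
  fixes k :: nat and V :: "'a set" and A :: "('a \<times> 'a) set"
  assumes k: "k > 0" and dg: "digraph V A" and Vne: "V \<noteq> {}" and T: "TkRDF k V A f"
  shows "k * card V + 1 \<le> (max_out_degree V A + k) * weight V f"
proof -
  define P where "P = {v\<in>V. f v \<noteq> {}}"
  define Z where "Z = {v\<in>V. f v = {}}"
  define D where "D = max_out_degree V A"
  define c where "c u = card {v\<in>Z. (u,v)\<in>A}" for u
  define g where "g u = card (f u)" for u
  have fin: "finite V" and AV: "A \<subseteq> V \<times> V" using dg by (auto simp: digraph_def)
  have kr: "kRDF k V A f" and ni: "no_isolated P A" using T by (auto simp: TkRDF_def P_def)
  have fsub: "\<And>v. v \<in> V \<Longrightarrow> f v \<subseteq> {1..k}" and fout: "\<And>v. v \<notin> V \<Longrightarrow> f v = {}"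
    and dom: "\<And>v. v \<in> V \<Longrightarrow> f v = {} \<Longrightarrow> (\<Union>u\<in>in_nbrs A v. f u) = {1..k}"
    using kr by (auto simp: kRDF_def)
  have finf: "finite (f v)" for v
    by (cases "v \<in> V") (auto intro: finite_subset[OF fsub] simp: fout)
  have finP: "finite P" and finZ: "finite Z" using fin by (auto simp: P_def Z_def)
  have od: "out_degree A u \<le> D" if "u \<in> V" for u
    unfolding D_def max_out_degree_def using that fin by simp
  have finout: "finite {v. (u,v) \<in> A}" for u
    by (rule finite_subset[OF _ fin]) (use AV in auto)
  have cD: "c u \<le> D" if "u \<in> V" for u
  proof -
    have "c u \<le> out_degree A u" unfolding c_def out_degree_def
      by (rule card_mono[OF finout]) auto
    thus ?thesis using od[OF that] by simp
  qed
  have Pne: "P \<noteq> {}"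
  proof
    assume "P = {}"
    hence all: "\<forall>v\<in>V. f v = {}" by (auto simp: P_def)
    obtain v where v: "v \<in> V" using Vne by auto
    have "(\<Union>u\<in>in_nbrs A v. f u) = {}" using all AV by (auto simp: in_nbrs_def)
    moreover have "(\<Union>u\<in>in_nbrs A v. f u) = {1..k}" using dom v all by auto
    ultimately show False using k by auto
  qed
  then obtain u where uP: "u \<in> P" by auto
  with ni obtain x where xP: "x \<in> P" and "(x,u) \<in> A \<or> (u,x) \<in> A"
    by (auto simp: no_isolated_def isolated_in_def)
  then obtain w y where wP: "w \<in> P" and yP: "y \<in> P" and wy: "(w,y) \<in> A" using uP by blast
  have cw: "c w + 1 \<le> D"
  proof -
    have "y \<notin> {v\<in>Z. (w,v)\<in>A}" using yP by (auto simp: P_def Z_def)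
    hence "c w + 1 = card (insert y {v\<in>Z. (w,v)\<in>A})" unfolding c_def
      using finZ by simp
    also have "\<dots> \<le> out_degree A w" unfolding out_degree_def
      by (rule card_mono[OF finout]) (use wy in auto)
    also have "\<dots> \<le> D" using od wP by (auto simp: P_def)
    finally show ?thesis .
  qed
  have gw: "g w \<ge> 1" using wP finf by (auto simp: P_def g_def card_gt_0_iff Suc_le_eq)
  have wt: "weight V f = (\<Sum>u\<in>P. g u)"
  proof -
    have "weight V f = (\<Sum>u\<in>V. g u)" by (simp add: weight_def g_def)
    also have "\<dots> = (\<Sum>u\<in>P. g u)"
      by (rule sum.mono_neutral_right[OF fin]) (auto simp: P_def g_def)
    finally show ?thesis .
  qed
  have cardV: "card V = card P + card Z"
  proof -
    have "V = P \<union> Z" "P \<inter> Z = {}" by (auto simp: P_def Z_def)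
    thus ?thesis using finP finZ card_Un_disjoint by metis
  qed
  have cP: "card P \<le> weight V f"
  proof -
    have "card P = (\<Sum>u\<in>P. 1)" by simp
    also have "\<dots> \<le> (\<Sum>u\<in>P. g u)"
      by (rule sum_mono) (use finf in \<open>auto simp: P_def g_def card_gt_0_iff Suc_le_eq\<close>)
    finally show ?thesis using wt by simp
  qed
  have zv: "k \<le> (\<Sum>u\<in>{u\<in>P. (u,v)\<in>A}. g u)" if vZ: "v \<in> Z" for v
  proof -
    have finin: "finite (in_nbrs A v)"
      by (rule finite_subset[OF _ fin]) (use AV in \<open>auto simp: in_nbrs_def\<close>)
    have "k = card (\<Union>u\<in>in_nbrs A v. f u)" using dom vZ by (auto simp: Z_def)
    also have "\<dots> \<le> (\<Sum>u\<in>in_nbrs A v. g u)" unfolding g_def by (rule card_UN_le[OF finin])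
    also have "\<dots> = (\<Sum>u\<in>{u\<in>P. (u,v)\<in>A}. g u)"
      by (rule sum.mono_neutral_right[OF finin])
         (use AV in \<open>auto simp: P_def g_def in_nbrs_def\<close>)
    finally show ?thesis .
  qed
  have "k * card Z = (\<Sum>v\<in>Z. k)" by simp
  also have "\<dots> \<le> (\<Sum>v\<in>Z. \<Sum>u\<in>{u\<in>P. (u,v)\<in>A}. g u)" by (rule sum_mono) (rule zv)
  also have "\<dots> = (\<Sum>u\<in>P. \<Sum>v\<in>{v\<in>Z. (u,v)\<in>A}. g u)"
    by (rule sum.swap_restrict[OF finZ finP])
  also have "\<dots> = (\<Sum>u\<in>P. g u * c u)" by (simp add: c_def mult.commute)
  finally have kZ: "k * card Z \<le> (\<Sum>u\<in>P. g u * c u)" .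
  have "(\<Sum>u\<in>P. g u * c u) + g w = g w * c w + g w + (\<Sum>u\<in>P-{w}. g u * c u)"
    using sum.remove[OF finP wP, of "\<lambda>u. g u * c u"] by simp
  also have "\<dots> \<le> g w * D + (\<Sum>u\<in>P-{w}. g u * D)"
  proof (rule add_mono)
    have "g w * c w + g w = g w * (c w + 1)" by simp
    also have "\<dots> \<le> g w * D" using cw by (rule mult_left_mono) simp
    finally show "g w * c w + g w \<le> g w * D" .
    show "(\<Sum>u\<in>P-{w}. g u * c u) \<le> (\<Sum>u\<in>P-{w}. g u * D)"
      by (rule sum_mono) (use cD in \<open>auto simp: P_def intro: mult_left_mono\<close>)
  qed
  also have "\<dots> = (\<Sum>u\<in>P. g u * D)"
    using sum.remove[OF finP wP, of "\<lambda>u. g u * D"] by simp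
  also have "\<dots> = D * weight V f" using wt by (simp add: sum_distrib_left mult.commute)
  finally have "k * card Z + 1 \<le> D * weight V f" using kZ gw by linarith
  hence "k * card V + 1 \<le> D * weight V f + k * card P" using cardV
    by (simp add: add_mult_distrib2)
  also have "\<dots> \<le> D * weight V f + k * weight V f" using cP by simp
  finally show ?thesis by (simp add: D_def add_mult_distrib)
qed


lemma gamma_facts:
  fixes k :: nat and V :: "'a set" and A :: "('a \<times> 'a) set"
  assumes dg: "digraph V A" and ni: "no_isolated V A"
  shows "\<exists>f. TkRDF k V A f \<and> gamma_trk k V A = weight V f"
proof -
  have fin: "finite V" using dg by (auto simp: digraph_def)
  let ?S = "{weight V f | f. TkRDF k V A f}"
  have ex: "TkRDF k V A (\<lambda>v. if v \<in> V then {1..k} else {})"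
    using ni by (auto simp: TkRDF_def kRDF_def no_isolated_def isolated_in_def)
  have bnd: "?S \<subseteq> {..k * card V}"
  proof
    fix x assume "x \<in> ?S"
    then obtain f where x: "x = weight V f" and T: "TkRDF k V A f" by auto
    have "\<forall>v\<in>V. f v \<subseteq> {1..k}" using T by (auto simp: TkRDF_def kRDF_def)
    hence "weight V f \<le> (\<Sum>v\<in>V. k)" unfolding weight_def
      by (intro sum_mono) (metis card_atLeastAtMost card_mono diff_Suc_1 finite_atLeastAtMost)
    thus "x \<in> {..k * card V}" using x by (simp add: mult.commute)
  qed
  have "finite ?S" using bnd finite_subset by blast
  moreover have "?S \<noteq> {}" using ex by blast
  ultimately have "gamma_trk k V A \<in> ?S" unfolding gamma_trk_def by (rule Min_in)
  thus ?thesis by auto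
qed

lemma sharp:
  fixes k :: nat assumes k: "k > 0"
  shows "\<exists>(V' :: nat set) A'. digraph V' A' \<and> V' \<noteq> {} \<and> no_isolated V' A' \<and>
          int (gamma_trk k V' A') =
            \<lceil>(real k * real (card V') + 1) / (real (max_out_degree V' A') + real k)\<rceil>"
proof (intro exI conjI)
  let ?V = "{0,1::nat}" and ?A = "{(0,1),(1,0::nat)}"
  show dg: "digraph ?V ?A" by (auto simp: digraph_def)
  show "?V \<noteq> {}" by simp
  show ni: "no_isolated ?V ?A" by (auto simp: no_isolated_def isolated_in_def)
  have od: "out_degree ?A v = 1" if "v \<in> ?V" for v
  proof -
    have "{w. (v,w) \<in> ?A} = {1 - v}" using that by auto
    thus ?thesis by (simp add: out_degree_def)
  qed
  have D: "max_out_degree ?V ?A = 1"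
  proof -
    have "out_degree ?A ` ?V = {1}" using od by auto
    thus ?thesis by (simp add: max_out_degree_def)
  qed
  have gam: "gamma_trk k ?V ?A = 2"
  proof -
    obtain f where T: "TkRDF k ?V ?A f" and g: "gamma_trk k ?V ?A = weight ?V f"
      using gamma_facts[OF dg ni] by blast
    have kr: "kRDF k ?V ?A f" and nI: "no_isolated {v\<in>?V. f v \<noteq> {}} ?A"
      using T by (auto simp: TkRDF_def)
    have fin: "finite (f v)" for v using kr unfolding kRDF_def
      by (metis finite_atLeastAtMost finite.emptyI finite_subset)
    have ne: "f v \<noteq> {}" if v: "v \<in> ?V" for v
    proof
      assume e: "f v = {}"
      have "(\<Union>u\<in>in_nbrs ?A v. f u) = {1..k}" using kr v e unfolding kRDF_def by blast
      moreover have "in_nbrs ?A v = {1 - v}" using v by (auto simp: in_nbrs_def)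
      ultimately have "f (1 - v) \<noteq> {}" using k by auto
      hence "(1-v) \<in> {v\<in>?V. f v \<noteq> {}}" using v by auto
      moreover have "isolated_in {v\<in>?V. f v \<noteq> {}} ?A (1 - v)"
        using v e by (auto simp: isolated_in_def)
      ultimately show False using nI by (auto simp: no_isolated_def)
    qed
    have "weight ?V f \<ge> 2"
    proof -
      have a: "card (f 0) > 0" using ne[of 0] fin[of 0] by (simp add: card_gt_0_iff)
      have b: "card (f 1) > 0" using ne[of 1] fin[of 1] by (simp add: card_gt_0_iff)
      show ?thesis using a b by (simp add: weight_def)
    qed
    moreover have "gamma_trk k ?V ?A \<le> 2"
    proof -
      have T2: "TkRDF k ?V ?A (\<lambda>v. if v \<in> ?V then {1} else {})"
        using k by (auto simp: TkRDF_def kRDF_def no_isolated_def isolated_in_def)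
      have w2: "weight ?V (\<lambda>v. if v \<in> ?V then {1} else {}) = 2" by (simp add: weight_def)
      have fS: "finite {weight ?V f | f. TkRDF k ?V ?A f}"
      proof (rule finite_subset)
        show "{weight ?V f | f. TkRDF k ?V ?A f} \<subseteq> {..2*k}"
        proof
          fix x assume "x \<in> {weight ?V f | f. TkRDF k ?V ?A f}"
          then obtain h where x: "x = weight ?V h" and Th: "TkRDF k ?V ?A h" by auto
          have "card (h v) \<le> k" if "v \<in> ?V" for v using Th that unfolding TkRDF_def kRDF_def
            by (metis card_atLeastAtMost card_mono diff_Suc_1 finite_atLeastAtMost)
          hence "card (h 0) \<le> k" "card (h 1) \<le> k" by auto
          thus "x \<in> {..2*k}" using x by (simp add: weight_def)
        qed
      qed simp
      have mem: "weight ?V (\<lambda>v. if v \<in> ?V then {1} else {}) \<in> {weight ?V f | f. TkRDF k ?V ?A f}"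
        using T2 by blast
      show ?thesis unfolding gamma_trk_def using Min_le[OF fS mem] w2 by simp
    qed
    ultimately show ?thesis using g by simp
  qed
  have c2: "\<lceil>(real k * real (card ?V) + 1) / (real (max_out_degree ?V ?A) + real k)\<rceil> = 2"
  proof -
    have "(real k * 2 + 1) / (1 + real k) \<le> 2" using k by (simp add: field_simps)
    moreover have "1 < (real k * 2 + 1) / (1 + real k)" using k by (simp add: field_simps)
    ultimately show ?thesis using D by (simp add: ceiling_eq_iff)
  qed
  thus "int (gamma_trk k ?V ?A) =
      \<lceil>(real k * real (card ?V) + 1) / (real (max_out_degree ?V ?A) + real k)\<rceil>"
    by (simp only: gam c2 of_nat_numeral)
qed

theorem theorem3p6:
  fixes k :: nat and V :: "'a set" and A :: "('a \<times> 'a) set"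
  assumes "k > 0" and "digraph V A" and "V \<noteq> {}" and "no_isolated V A"
  shows "of_int \<lceil>(real k * real (card V) + 1) / (real (max_out_degree V A) + real k)\<rceil>
           \<le> int (gamma_trk k V A)
     \<and> (\<exists>(V' :: nat set) A'. digraph V' A' \<and> V' \<noteq> {} \<and> no_isolated V' A' \<and>
          int (gamma_trk k V' A') =
            \<lceil>(real k * real (card V') + 1) / (real (max_out_degree V' A') + real k)\<rceil>)"
proof
  obtain f where T: "TkRDF k V A f" and g: "gamma_trk k V A = weight V f"
    using gamma_facts[OF assms(2,4)] by blast
  have l: "k * card V + 1 \<le> (max_out_degree V A + k) * weight V f"
    using lower_weight[OF assms(1,2,3) T] .
  have lr: "real (k * card V + 1) \<le> real ((max_out_degree V A + k) * weight V f)"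
    using l by (simp only: of_nat_le_iff)
  hence lr: "real k * real (card V) + 1 \<le> real (weight V f) * (real (max_out_degree V A) + real k)"
    by (simp add: mult.commute)
  have pos: "real (max_out_degree V A) + real k > 0" using assms(1) by simp
  have "(real k * real (card V) + 1) / (real (max_out_degree V A) + real k) \<le> real (weight V f)"
    unfolding pos_divide_le_eq[OF pos] by (rule lr)
  hence "\<lceil>(real k * real (card V) + 1) / (real (max_out_degree V A) + real k)\<rceil> \<le> int (weight V f)"
    by (simp add: ceiling_le_iff)
  thus "of_int \<lceil>(real k * real (card V) + 1) / (real (max_out_degree V A) + real k)\<rceil>
           \<le> int (gamma_trk k V A)" using g by simp
  show "\<exists>(V' :: nat set) A'. digraph V' A' \<and> V' \<noteq> {} \<and> no_isolated V' A' \<and>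
          int (gamma_trk k V' A') =
            \<lceil>(real k * real (card V') + 1) / (real (max_out_degree V' A') + real k)\<rceil>"
    using sharp[OF assms(1)] .
qed

end
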